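(* Suppose that for $m=0$ and all $\mu\in\mathcal{P}(\overline{\mathbb{Z}})$, $$-I(\mu)\le\lim_{\varepsilon\to0^+}\liminf_{n\to\infty}\frac1n\log\mathbb{P}_m\big(\ell_n\in B(\mu,\varepsilon)\big)\quad\text{and}\quad\lim_{\varepsilon\to0^+}\limsup_{n\to\infty}\frac1n\log\mathbb{P}_m\big(\ell_n\in B(\mu,\varepsilon)\big)\le-I(\mu).$$ Then these two inequalities hold for all $m\in\mathbb{Z}$ and all $\mu\in\mathcal{P}(\overline{\mathbb{Z}})$.
   Context: $\overline{\mathbb{Z}}=\mathbb{Z}\cup\{-\infty,+\infty\}$ is the two-point compactification of $\mathbb{Z}$. Let $p:\mathbb{Z}\to[0,1]$ with $0<p(k)<1$ for all $k$ and limits $p_\pm=\lim_{k\to\pm\infty}p(k)\in(0,1)$. Under $\mathbb{P}_m$, $(S_n)_{n\ge1}$ is the Markov chain on $\overline{\mathbb{Z}}$ with $S_1=m$, $\pm\infty$ absorbing, $k\to k+1$ w.p. $p(k)$ and $k\to k-1$ w.p. $1-p(k)$ for $k\in\mathbb{Z}$; $\ell_n=\frac1n\sum_{j=1}^n\delta_{S_j}$. Metric on $\overline{\mathbb{Z}}$: $d(h,k)=|\varphi(h)-\varphi(k)|$ with $\varphi(\pm\infty)=\pm1$, $\varphi(k)=1-2^{-k}$ for $k\ge0$, $\varphi(k)=-1+2^{-|k|}$ for $k<0$. $\|\nu\|=\sup\{\int f\,d\nu: f\text{ 1-Lipschitz for }d,\ \sup|f|\le1\}$ and $B(\mu,\varepsilon)=\{\nu\in\mathcal{P}(\overline{\mathbb{Z}}):\|\nu-\mu\|<\varepsilon\}$.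 For $\mu=\alpha_-\delta_{-\infty}+\alpha_0\mu_0+\alpha_+\delta_{+\infty}$ ($\alpha_\sigma\ge0$ summing to 1, $\mu_0\in\mathcal{P}(\mathbb{Z})$), with $0\cdot\infty=0$: $I(\mu)=\alpha_0 I_{\mathrm{DV}}(\mu_0)+\min\{\alpha_- I^{p_-}_{\mathrm{Cr}}(0)+\alpha_+\inf_{x\in[0,1]}I^{p_+}_{\mathrm{Cr}}(x)\,;\,\alpha_+ I^{p_+}_{\mathrm{Cr}}(0)+\alpha_-\inf_{x\in[-1,0]}I^{p_-}_{\mathrm{Cr}}(x)\}$, where $I_{\mathrm{DV}}(\nu)=\sup_{u_k\ge1}\sum_{k}\nu(k)\log\frac{u_k}{p(k)u_{k+1}+(1-p(k))u_{k-1}}$ and $I^q_{\mathrm{Cr}}(x)=\frac{1-x}{2}\log\frac{1-x}{2(1-q)}+\frac{1+x}{2}\log\frac{1+x}{2q}$ on $[-1,1]$, $+\infty$ elsewhere. *)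

theory Defs
  imports "HOL-Probability.Probability" "HOL-Library.Countable"
begin

datatype zbar = MInf | Fin int | PInf

instance zbar :: countable
  by countable_datatype

fun phiZ :: "zbar \<Rightarrow> real" where
  "phiZ MInf = -1"
| "phiZ PInf = 1"
| "phiZ (Fin k) = (if k \<ge> 0 then 1 - 2 powr (- real_of_int k) else -1 + 2 powr (real_of_int k))"

definition dZ :: "zbar \<Rightarrow> zbar \<Rightarrow> real" where
  "dZ h k = \<bar>phiZ h - phiZ k\<bar>"

text \<open>Bounded-Lipschitz distance ||nu - mu|| between probability measures on zbar
  (probability measures on the countable space zbar are exactly pmfs).\<close>
definition bl_dist :: "zbar pmf \<Rightarrow> zbar pmf \<Rightarrow> real" where
  "bl_dist \<nu> \<mu> = Sup {measure_pmf.expectation \<nu> f - measure_pmf.expectation \<mu> f | f.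
      (\<forall>x y. \<bar>f x - f y\<bar> \<le> dZ x y) \<and> (\<forall>x. \<bar>f x\<bar> \<le> 1)}"

fun step :: "(int \<Rightarrow> real) \<Rightarrow> zbar \<Rightarrow> zbar pmf" where
  "step p MInf = return_pmf MInf"
| "step p PInf = return_pmf PInf"
| "step p (Fin k) = map_pmf (\<lambda>b. if b then Fin (k + 1) else Fin (k - 1)) (bernoulli_pmf (p k))"

text \<open>traj p x n is the law of the list [S_1, ..., S_n] when S_1 = x.\<close>
primrec traj :: "(int \<Rightarrow> real) \<Rightarrow> zbar \<Rightarrow> nat \<Rightarrow> zbar list pmf" where
  "traj p x 0 = return_pmf []"
| "traj p x (Suc n) = map_pmf (Cons x) (bind_pmf (step p x) (\<lambda>y. traj p y n))"

text \<open>Empirical measure ell_n = (1/n) sum_j delta_{S_j} of a nonempty path.\<close>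
definition empirical :: "zbar list \<Rightarrow> zbar pmf" where
  "empirical xs = pmf_of_multiset (mset xs)"

definition ball_prob :: "(int \<Rightarrow> real) \<Rightarrow> int \<Rightarrow> nat \<Rightarrow> zbar pmf \<Rightarrow> real \<Rightarrow> real" where
  "ball_prob p m n \<mu> \<epsilon> =
     measure_pmf.prob (traj p (Fin m) n) {xs. bl_dist (empirical xs) \<mu> < \<epsilon>}"

definition eln :: "real \<Rightarrow> ereal" where
  "eln x = (if x = 0 then - \<infinity> else ereal (ln x))"

definition lower_lim :: "(int \<Rightarrow> real) \<Rightarrow> int \<Rightarrow> zbar pmf \<Rightarrow> ereal" where
  "lower_lim p m \<mu> = Lim (at_right (0::real))
     (\<lambda>\<epsilon>. liminf (\<lambda>n. ereal (1 / real n) * eln (ball_prob p m n \<mu> \<epsilon>)))"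

definition upper_lim :: "(int \<Rightarrow> real) \<Rightarrow> int \<Rightarrow> zbar pmf \<Rightarrow> ereal" where
  "upper_lim p m \<mu> = Lim (at_right (0::real))
     (\<lambda>\<epsilon>. limsup (\<lambda>n. ereal (1 / real n) * eln (ball_prob p m n \<mu> \<epsilon>)))"

text \<open>Cramer rate function of a +-1 step with up-probability q.\<close>
definition cramer :: "real \<Rightarrow> real \<Rightarrow> ereal" where
  "cramer q x = (if x \<in> {-1..1} then
     ereal ((1 - x) / 2 * ln ((1 - x) / (2 * (1 - q))) + (1 + x) / 2 * ln ((1 + x) / (2 * q)))
   else \<infinity>)"

text \<open>Donsker-Varadhan functional on a probability vector nu on Z.\<close>
definition I_DV :: "(int \<Rightarrow> real) \<Rightarrow> (int \<Rightarrow> real) \<Rightarrow> ereal" where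
  "I_DV p \<nu> = (SUP u \<in> {u. (\<forall>k. u k \<ge> 1) \<and>
        (\<lambda>k. \<nu> k * ln (u k / (p k * u (k + 1) + (1 - p k) * u (k - 1)))) summable_on UNIV}.
      ereal (\<Sum>\<^sub>\<infinity>k. \<nu> k * ln (u k / (p k * u (k + 1) + (1 - p k) * u (k - 1)))))"

definition rate :: "(int \<Rightarrow> real) \<Rightarrow> real \<Rightarrow> real \<Rightarrow> zbar pmf \<Rightarrow> ereal" where
  "rate p pm pp \<mu> =
    (let am = pmf \<mu> MInf; ap = pmf \<mu> PInf; a0 = 1 - am - ap;
         \<mu>0 = (\<lambda>k. pmf \<mu> (Fin k) / a0)
     in (if a0 = 0 then 0 else ereal a0 * I_DV p \<mu>0)
        + min (ereal am * cramer pm 0 + ereal ap * (INF x\<in>{0..1}. cramer pp x))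
              (ereal ap * cramer pp 0 + ereal am * (INF x\<in>{-1..0}. cramer pm x)))"

end

theory Submission imports Defs begin

lemma sum_count_real:
  "sum_list (map (f::'a \<Rightarrow> real) xs) = (\<Sum>x\<in>set xs. real (count_list xs x) * f x)"
proof(induction xs)
  case (Cons x xs)
  show ?case (is "?l = ?r")
  proof cases
    assume "x \<in> set xs"
    have "?l = f x + (\<Sum>x\<in>set xs. real (count_list xs x) * f x)" by (simp add: Cons.IH)
    also have "set xs = insert x (set xs - {x})" using \<open>x \<in> set xs\<close> by blast
    also have "f x + (\<Sum>x\<in>insert x (set xs - {x}). real (count_list xs x) * f x) = ?r"
      by (simp add: sum.insert_remove eq_commute algebra_simps)
    finally show ?thesis .
  next
    assume "x \<notin> set xs"
    hence "\<And>xa. xa \<in> set xs \<Longrightarrow> x \<noteq> xa" by blast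
    thus ?thesis by (simp add: Cons.IH \<open>x \<notin> set xs\<close>)
  qed
qed simp

lemma emp_int:
  fixes f :: "zbar \<Rightarrow> real"
  assumes "xs \<noteq> []"
  shows "measure_pmf.expectation (empirical xs) f = sum_list (map f xs) / length xs"
proof -
  have "measure_pmf.expectation (empirical xs) f = (\<Sum>a\<in>set xs. pmf (empirical xs) a *\<^sub>R f a)"
    by (rule integral_measure_pmf) (use assms in \<open>auto simp: empirical_def\<close>)
  also have "\<dots> = (\<Sum>a\<in>set xs. count_list xs a * f a) / length xs"
    using assms by (simp add: empirical_def sum_divide_distrib count_mset)
  also have "\<dots> = sum_list (map f xs) / length xs"
    by (simp add: sum_count_real)
  finally show ?thesis .
qed

lemma sum_list_abs_le:
  fixes f :: "zbar \<Rightarrow> real"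
  assumes "\<forall>x. \<bar>f x\<bar> \<le> 1"
  shows "\<bar>sum_list (map f xs)\<bar> \<le> length xs"
proof (induction xs)
  case (Cons a xs)
  have "\<bar>f a + sum_list (map f xs)\<bar> \<le> \<bar>f a\<bar> + \<bar>sum_list (map f xs)\<bar>" by (rule abs_triangle_ineq)
  then show ?case using Cons assms[rule_format, of a] by simp
qed simp

lemma exp_bound:
  fixes f :: "zbar \<Rightarrow> real" and \<mu> :: "zbar pmf"
  assumes "\<forall>x. \<bar>f x\<bar> \<le> 1"
  shows "\<bar>measure_pmf.expectation \<mu> f\<bar> \<le> 1"
proof -
  have int: "integrable (measure_pmf \<mu>) f"
    by (rule measure_pmf.integrable_const_bound[where B=1]) (use assms in auto)
  have "\<bar>measure_pmf.expectation \<mu> f\<bar> \<le> measure_pmf.expectation \<mu> (\<lambda>x. \<bar>f x\<bar>)"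
    by (rule integral_abs_bound)
  also have "\<dots> \<le> 1"
    by (rule measure_pmf.integral_le_const) (use assms int in auto)
  finally show ?thesis .
qed

lemma bl_set_bdd:
  "bdd_above {measure_pmf.expectation \<nu> f - measure_pmf.expectation \<mu> f | f.
      (\<forall>x y. \<bar>f x - f y\<bar> \<le> dZ x y) \<and> (\<forall>x. \<bar>f x\<bar> \<le> 1)}"
proof (rule bdd_aboveI[where M=2], clarify)
  fix f :: "zbar \<Rightarrow> real"
  assume "\<forall>x. \<bar>f x\<bar> \<le> 1"
  then have "\<bar>measure_pmf.expectation \<nu> f\<bar> \<le> 1" "\<bar>measure_pmf.expectation \<mu> f\<bar> \<le> 1"
    using exp_bound by blast+
  then show "measure_pmf.expectation \<nu> f - measure_pmf.expectation \<mu> f \<le> 2" by linarith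
qed

lemma arith_bound:
  fixes a b k n :: real
  assumes "\<bar>a\<bar> \<le> k" "\<bar>b\<bar> \<le> n" "n > 0"
  shows "(a + b) / (k + n) - b / n \<le> 2 * k / n"
proof -
  have k0: "k \<ge> 0" using assms by linarith
  have "(a + b) / (k + n) - b / n = (n * a - k * b) / (n * (k + n))"
    using assms k0 by (simp add: field_simps)
  also have "\<dots> \<le> (2 * n * k) / (n * (k + n))"
  proof (rule divide_right_mono)
    have "n * a \<le> n * k" using assms by (intro mult_left_mono) auto
    moreover have "- (k * b) \<le> k * n" using assms k0
      by (metis abs_le_D2 minus_mult_right mult_left_mono)
    ultimately show "n * a - k * b \<le> 2 * n * k" by (simp add: algebra_simps)
  qed (use assms k0 in auto)
  also have "\<dots> = 2 * k / (k + n)"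
  proof -
    have "k + n > 0" using assms k0 by linarith
    have "(2 * n * k) / (n * (k + n)) = (n * (2 * k)) / (n * (k + n))" by (simp add: ac_simps)
    also have "\<dots> = 2 * k / (k + n)" using assms by (intro nonzero_mult_divide_mult_cancel_left) auto
    finally show ?thesis .
  qed
  also have "\<dots> \<le> 2 * k / n" using assms k0 by (intro divide_left_mono) auto
  finally show ?thesis .
qed

lemma bl_app:
  assumes "xs \<noteq> []"
  shows "bl_dist (empirical (ys @ xs)) \<mu> \<le> bl_dist (empirical xs) \<mu> + 2 * real (length ys) / real (length xs)"
  unfolding bl_dist_def
proof (rule cSup_least)
  show "{measure_pmf.expectation (empirical (ys @ xs)) f - measure_pmf.expectation \<mu> f | f.
      (\<forall>x y. \<bar>f x - f y\<bar> \<le> dZ x y) \<and> (\<forall>x. \<bar>f x\<bar> \<le> 1)} \<noteq> {}"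
    by (rule ccontr) (auto simp: dZ_def dest: spec[where x="\<lambda>_. 0"])
next
  fix r assume "r \<in> {measure_pmf.expectation (empirical (ys @ xs)) f - measure_pmf.expectation \<mu> f | f.
      (\<forall>x y. \<bar>f x - f y\<bar> \<le> dZ x y) \<and> (\<forall>x. \<bar>f x\<bar> \<le> 1)}"
  then obtain f where r: "r = measure_pmf.expectation (empirical (ys @ xs)) f - measure_pmf.expectation \<mu> f"
    and f: "\<forall>x y. \<bar>f x - f y\<bar> \<le> dZ x y" "\<forall>x. \<bar>f x\<bar> \<le> 1" by blast
  have up: "measure_pmf.expectation (empirical xs) f - measure_pmf.expectation \<mu> f \<le>
     Sup {measure_pmf.expectation (empirical xs) f - measure_pmf.expectation \<mu> f | f.
      (\<forall>x y. \<bar>f x - f y\<bar> \<le> dZ x y) \<and> (\<forall>x. \<bar>f x\<bar> \<le> 1)}"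
    by (rule cSup_upper[OF _ bl_set_bdd]) (use f in blast)
  have e1: "measure_pmf.expectation (empirical (ys @ xs)) f =
     (sum_list (map f ys) + sum_list (map f xs)) / (real (length ys) + real (length xs))"
    using assms by (subst emp_int) auto
  have e2: "measure_pmf.expectation (empirical xs) f = sum_list (map f xs) / length xs"
    using assms by (rule emp_int)
  have "measure_pmf.expectation (empirical (ys @ xs)) f - measure_pmf.expectation (empirical xs) f
     \<le> 2 * real (length ys) / real (length xs)"
    unfolding e1 e2
    by (rule arith_bound) (use sum_list_abs_le[OF f(2)] assms in auto)
  then show "r \<le> Sup {measure_pmf.expectation (empirical xs) f - measure_pmf.expectation \<mu> f | f.
      (\<forall>x y. \<bar>f x - f y\<bar> \<le> dZ x y) \<and> (\<forall>x. \<bar>f x\<bar> \<le> 1)} + 2 * real (length ys) / real (length xs)"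
    using up r by linarith
qed

lemma traj_len: "set_pmf (traj p x n) \<subseteq> {xs. length xs = n}"
proof (induction n arbitrary: x)
  case (Suc n)
  show ?case
  proof
    fix zs assume "zs \<in> set_pmf (traj p x (Suc n))"
    then obtain y ys where "zs = x # ys" "ys \<in> set_pmf (traj p y n)"
      by (auto simp: set_bind_pmf)
    then show "zs \<in> {xs. length xs = Suc n}" using Suc[of y] by auto
  qed
qed simp


lemma step_lower:
  "pmf (step p x) y * measure (traj p y n) {xs. x # xs \<in> S} \<le> measure (traj p x (Suc n)) S"
proof -
  let ?T = "{xs. x # xs \<in> S}"
  have "emeasure (measure_pmf (traj p x (Suc n))) S =
        emeasure (measure_pmf (bind_pmf (step p x) (\<lambda>y. traj p y n))) ?T"
    by (simp add: vimage_def)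
  also have "\<dots> = (\<integral>\<^sup>+z. emeasure (traj p z n) ?T \<partial>step p x)" by simp
  also have "\<dots> \<ge> (\<integral>\<^sup>+z. emeasure (traj p y n) ?T * indicator {y} z \<partial>step p x)"
    by (intro nn_integral_mono) (auto split: split_indicator)
  also have "(\<integral>\<^sup>+z. emeasure (traj p y n) ?T * indicator {y} z \<partial>step p x) =
       emeasure (traj p y n) ?T * emeasure (step p x) {y}"
    by (simp add: nn_integral_cmult_indicator)
  also have "\<dots> = ennreal (measure (traj p y n) ?T * pmf (step p x) y)"
    by (simp add: measure_pmf.emeasure_eq_measure measure_pmf_single ennreal_mult)
  finally have "ennreal (measure (traj p y n) ?T * pmf (step p x) y) \<le> ennreal (measure (traj p x (Suc n)) S)"
    by (simp add: measure_pmf.emeasure_eq_measure)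
  then show ?thesis by (simp add: ennreal_le_iff mult.commute)
qed

lemma pmf_step_down: "0 \<le> p a \<Longrightarrow> p a \<le> 1 \<Longrightarrow> pmf (step p (Fin a)) (Fin (a - 1)) = 1 - p a"
proof -
  assume h: "0 \<le> p a" "p a \<le> 1"
  have "(\<lambda>b. if b then Fin (a + 1) else Fin (a - 1)) -` {Fin (a - 1)} = {False}" by auto
  then show ?thesis using h by (simp add: pmf_map measure_pmf_single)
qed

lemma pmf_step_up: "0 \<le> p a \<Longrightarrow> p a \<le> 1 \<Longrightarrow> pmf (step p (Fin a)) (Fin (a + 1)) = p a"
proof -
  assume h: "0 \<le> p a" "p a \<le> 1"
  have "(\<lambda>b. if b then Fin (a + 1) else Fin (a - 1)) -` {Fin (a + 1)} = {True}" by (auto split: if_splits)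
  then show ?thesis using h by (simp add: pmf_map measure_pmf_single)
qed

lemma path_down:
  assumes "\<forall>k. 0 < p k \<and> p k < 1"
  shows "\<forall>a. \<exists>c>0. \<exists>ys. length ys = k \<and>
    (\<forall>n S. c * measure (traj p (Fin (a - int k)) n) {xs. ys @ xs \<in> S} \<le> measure (traj p (Fin a) (k + n)) S)"
proof (induction k)
  case 0
  show ?case by (intro allI exI[of _ 1] conjI exI[of _ "[]"]) auto
next
  case (Suc k)
  show ?case
  proof
    fix a
    obtain c ys where c: "c > 0" "length ys = k"
      and h: "\<And>n S. c * measure (traj p (Fin (a - 1 - int k)) n) {xs. ys @ xs \<in> S} \<le> measure (traj p (Fin (a - 1)) (k + n)) S"
      using Suc[rule_format, of "a - 1"] by blast
    have pa: "0 < 1 - p a" "0 \<le> p a" "p a \<le> 1" using assms[rule_format, of a] by auto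
    show "\<exists>c>0. \<exists>ys. length ys = Suc k \<and>
    (\<forall>n S. c * measure (traj p (Fin (a - int (Suc k))) n) {xs. ys @ xs \<in> S} \<le> measure (traj p (Fin a) (Suc k + n)) S)"
    proof (intro exI[of _ "(1 - p a) * c"] conjI exI[of _ "Fin a # ys"] allI)
      fix n S
      have "(1 - p a) * c * measure (traj p (Fin (a - int (Suc k))) n) {xs. (Fin a # ys) @ xs \<in> S}
         = (1 - p a) * (c * measure (traj p (Fin (a - 1 - int k)) n) {xs. ys @ xs \<in> {zs. Fin a # zs \<in> S}})"
        by (simp add: algebra_simps)
      also have "\<dots> \<le> (1 - p a) * measure (traj p (Fin (a - 1)) (k + n)) {zs. Fin a # zs \<in> S}"
        using h[of n "{zs. Fin a # zs \<in> S}"] pa by (intro mult_left_mono) auto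
      also have "\<dots> \<le> measure (traj p (Fin a) (Suc (k + n))) S"
        using step_lower[of p "Fin a" "Fin (a - 1)" "k + n" S] pmf_step_down[of p a, OF pa(2,3)] by simp
      finally show "(1 - p a) * c * measure (traj p (Fin (a - int (Suc k))) n) {xs. (Fin a # ys) @ xs \<in> S}
         \<le> measure (traj p (Fin a) (Suc k + n)) S" by simp
    qed (use c pa in auto)
  qed
qed

lemma path_up:
  assumes "\<forall>k. 0 < p k \<and> p k < 1"
  shows "\<forall>a. \<exists>c>0. \<exists>ys. length ys = k \<and>
    (\<forall>n S. c * measure (traj p (Fin (a + int k)) n) {xs. ys @ xs \<in> S} \<le> measure (traj p (Fin a) (k + n)) S)"
proof (induction k)
  case 0
  show ?case by (intro allI exI[of _ 1] conjI exI[of _ "[]"]) auto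
next
  case (Suc k)
  show ?case
  proof
    fix a
    obtain c ys where c: "c > 0" "length ys = k"
      and h: "\<And>n S. c * measure (traj p (Fin (a + 1 + int k)) n) {xs. ys @ xs \<in> S} \<le> measure (traj p (Fin (a + 1)) (k + n)) S"
      using Suc[rule_format, of "a + 1"] by blast
    have pa: "0 < p a" "0 \<le> p a" "p a \<le> 1" using assms[rule_format, of a] by auto
    show "\<exists>c>0. \<exists>ys. length ys = Suc k \<and>
    (\<forall>n S. c * measure (traj p (Fin (a + int (Suc k))) n) {xs. ys @ xs \<in> S} \<le> measure (traj p (Fin a) (Suc k + n)) S)"
    proof (intro exI[of _ "p a * c"] conjI exI[of _ "Fin a # ys"] allI)
      fix n S
      have "p a * c * measure (traj p (Fin (a + int (Suc k))) n) {xs. (Fin a # ys) @ xs \<in> S}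
         = p a * (c * measure (traj p (Fin (a + 1 + int k)) n) {xs. ys @ xs \<in> {zs. Fin a # zs \<in> S}})"
        by (simp add: algebra_simps)
      also have "\<dots> \<le> p a * measure (traj p (Fin (a + 1)) (k + n)) {zs. Fin a # zs \<in> S}"
        using h[of n "{zs. Fin a # zs \<in> S}"] pa by (intro mult_left_mono) auto
      also have "\<dots> \<le> measure (traj p (Fin a) (Suc (k + n))) S"
        using step_lower[of p "Fin a" "Fin (a + 1)" "k + n" S] pmf_step_up[of p a, OF pa(2,3)] by simp
      finally show "p a * c * measure (traj p (Fin (a + int (Suc k))) n) {xs. (Fin a # ys) @ xs \<in> S}
         \<le> measure (traj p (Fin a) (Suc k + n)) S" by simp
    qed (use c pa in auto)
  qed
qed

lemma path_gen:
  assumes "\<forall>k. 0 < p k \<and> p k < 1"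
  shows "\<exists>c>0. \<exists>ys. \<forall>n S. c * measure (traj p (Fin b) n) {xs. ys @ xs \<in> S} \<le> measure (traj p (Fin a) (length ys + n)) S"
proof (cases "b \<le> a")
  case True
  obtain c ys where c: "c > 0" "length ys = nat (a - b)" and h:
    "\<forall>n S. c * measure (traj p (Fin (a - int (nat (a - b)))) n) {xs. ys @ xs \<in> S} \<le> measure (traj p (Fin a) (nat (a - b) + n)) S"
    using path_down[OF assms, of "nat (a - b)"] by blast
  have "a - int (nat (a - b)) = b" using True by simp
  then show ?thesis using c h by (intro exI[of _ c] conjI exI[of _ ys]) auto
next
  case False
  obtain c ys where c: "c > 0" "length ys = nat (b - a)" and h:
    "\<forall>n S. c * measure (traj p (Fin (a + int (nat (b - a)))) n) {xs. ys @ xs \<in> S} \<le> measure (traj p (Fin a) (nat (b - a) + n)) S"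
    using path_up[OF assms, of "nat (b - a)"] by blast
  have "a + int (nat (b - a)) = b" using False by simp
  then show ?thesis using c h by (intro exI[of _ c] conjI exI[of _ ys]) auto
qed

lemma ball_compare:
  assumes "\<forall>k. 0 < p k \<and> p k < 1"
  shows "\<exists>c>0. \<exists>k. \<forall>n \<epsilon> \<delta>. n \<ge> 1 \<longrightarrow> 2 * real k / real n \<le> \<delta> \<longrightarrow>
     c * ball_prob p b n \<mu> \<epsilon> \<le> ball_prob p a (n + k) \<mu> (\<epsilon> + \<delta>)"
proof -
  obtain c ys where c: "c > 0" and h: "\<And>n S. c * measure (traj p (Fin b) n) {xs. ys @ xs \<in> S} \<le> measure (traj p (Fin a) (length ys + n)) S"
    using path_gen[OF assms, of b a] by blast
  show ?thesis
  proof (intro exI[of _ c] conjI exI[of _ "length ys"] allI impI)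
    fix n :: nat and \<epsilon> \<delta> :: real
    assume n: "n \<ge> 1" and d: "2 * real (length ys) / real n \<le> \<delta>"
    let ?S = "{zs. bl_dist (empirical zs) \<mu> < \<epsilon> + \<delta>}"
    let ?B = "{xs. bl_dist (empirical xs) \<mu> < \<epsilon>}"
    have sub: "?B \<inter> set_pmf (traj p (Fin b) n) \<subseteq> {xs. ys @ xs \<in> ?S}"
    proof
      fix xs assume xs: "xs \<in> ?B \<inter> set_pmf (traj p (Fin b) n)"
      then have len: "length xs = n" using traj_len by blast
      then have "xs \<noteq> []" using n by auto
      then have "bl_dist (empirical (ys @ xs)) \<mu> \<le> bl_dist (empirical xs) \<mu> + 2 * real (length ys) / real (length xs)"
        by (rule bl_app)
      then show "xs \<in> {xs. ys @ xs \<in> ?S}" using xs len d by auto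
    qed
    have "ball_prob p b n \<mu> \<epsilon> = measure (traj p (Fin b) n) (?B \<inter> set_pmf (traj p (Fin b) n))"
      by (simp add: ball_prob_def measure_Int_set_pmf)
    also have "\<dots> \<le> measure (traj p (Fin b) n) {xs. ys @ xs \<in> ?S}"
      using sub by (intro measure_pmf.finite_measure_mono) auto
    finally have "c * ball_prob p b n \<mu> \<epsilon> \<le> c * measure (traj p (Fin b) n) {xs. ys @ xs \<in> ?S}"
      using c by (intro mult_left_mono) auto
    also have "\<dots> \<le> measure (traj p (Fin a) (length ys + n)) ?S" by (rule h)
    finally show "c * ball_prob p b n \<mu> \<epsilon> \<le> ball_prob p a (n + length ys) \<mu> (\<epsilon> + \<delta>)"
      by (simp add: ball_prob_def add.commute)
  qed (use c in auto)
qed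


definition GG :: "(nat \<Rightarrow> real) \<Rightarrow> nat \<Rightarrow> ereal" where
  "GG z n = ereal (1 / real n) * eln (z n)"

lemma GG_key:
  fixes x y :: "nat \<Rightarrow> real"
  assumes y: "0 \<le> y n" "y n \<le> 1" and c: "c > 0" and n: "n \<ge> 1" and h: "c * y n \<le> x (n + k)"
  shows "ereal (ln c / real (n + k)) + GG y n \<le> GG x (n + k)"
proof (cases "y n = 0")
  case True
  have "GG y n = - \<infinity>" using True n by (simp add: GG_def eln_def)
  then show ?thesis by simp
next
  case False
  then have yp: "y n > 0" using y by auto
  then have xp: "x (n + k) > 0" using h c by (meson less_le_trans mult_pos_pos)
  have g1: "GG y n = ereal (ln (y n) / real n)" using yp by (simp add: GG_def eln_def)
  have g2: "GG x (n + k) = ereal (ln (x (n + k)) / real (n + k))" using xp by (simp add: GG_def eln_def)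
  have l1: "ln c + ln (y n) \<le> ln (x (n + k))"
  proof -
    have "ln c + ln (y n) = ln (c * y n)" using c yp by (simp add: ln_mult)
    also have "\<dots> \<le> ln (x (n + k))" using h c yp by (intro ln_mono) auto
    finally show ?thesis .
  qed
  have l2: "ln (y n) \<le> 0" using y yp by simp
  have l3: "ln (y n) / real n \<le> ln (y n) / real (n + k)"
    using l2 n by (intro divide_left_mono_neg) auto
  have "ln c / real (n + k) + ln (y n) / real n \<le> ln c / real (n + k) + ln (y n) / real (n + k)"
    using l3 by simp
  also have "\<dots> = (ln c + ln (y n)) / real (n + k)" by (simp add: add_divide_distrib)
  also have "\<dots> \<le> ln (x (n + k)) / real (n + k)"
    using l1 by (intro divide_right_mono) auto
  finally show ?thesis unfolding g1 g2 by simp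
qed

lemma GG_compare:
  fixes x y :: "nat \<Rightarrow> real"
  assumes y: "\<forall>n. 0 \<le> y n \<and> y n \<le> 1" and c: "c > 0" and h: "\<forall>n\<ge>N. c * y n \<le> x (n + k)"
  shows "liminf (GG y) \<le> liminf (GG x)" "limsup (GG y) \<le> limsup (GG x)"
proof -
  let ?e = "\<lambda>n. ereal (ln c / real (n + k))"
  have e0: "?e \<longlonglongrightarrow> ereal 0"
  proof (intro tendsto_intros)
    show "(\<lambda>n. ln c / real (n + k)) \<longlonglongrightarrow> 0"
      using LIMSEQ_ignore_initial_segment[OF lim_const_over_n[of "ln c"], of k] by simp
  qed
  have ev: "eventually (\<lambda>n. ?e n + GG y n \<le> GG x (n + k)) sequentially"
    using eventually_ge_at_top[of "max N 1"]
  proof eventually_elim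
    case (elim n)
    then show ?case using y h c by (intro GG_key) auto
  qed
  have "liminf (GG y) = liminf (\<lambda>n. ?e n + GG y n)"
    using ereal_liminf_lim_add[OF e0] by simp
  also have "\<dots> \<le> liminf (\<lambda>n. GG x (n + k))" by (rule Liminf_mono[OF ev])
  also have "\<dots> = liminf (GG x)" by (rule liminf_shift_k)
  finally show "liminf (GG y) \<le> liminf (GG x)" .
  have "limsup (GG y) = limsup (\<lambda>n. ?e n + GG y n)"
    using ereal_limsup_lim_add[OF e0] by simp
  also have "\<dots> \<le> limsup (\<lambda>n. GG x (n + k))" by (rule Limsup_mono[OF ev])
  also have "\<dots> = limsup (GG x)" by (rule limsup_shift_k)
  finally show "limsup (GG y) \<le> limsup (GG x)" .
qed

lemma ball_prob_mono: "\<epsilon> \<le> \<epsilon>' \<Longrightarrow> ball_prob p m n \<mu> \<epsilon> \<le> ball_prob p m n \<mu> \<epsilon>'"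
  unfolding ball_prob_def by (intro measure_pmf.finite_measure_mono) auto

lemma ball_prob_bounds: "0 \<le> ball_prob p m n \<mu> \<epsilon> \<and> ball_prob p m n \<mu> \<epsilon> \<le> 1"
  unfolding ball_prob_def by auto

lemma eln_mono: "0 \<le> a \<Longrightarrow> a \<le> b \<Longrightarrow> eln a \<le> eln b"
  by (auto simp: eln_def)

lemma GG_ball_mono: "\<epsilon> \<le> \<epsilon>' \<Longrightarrow> GG (\<lambda>n. ball_prob p m n \<mu> \<epsilon>) n \<le> GG (\<lambda>n. ball_prob p m n \<mu> \<epsilon>') n"
  unfolding GG_def
  by (intro ereal_mult_left_mono eln_mono ball_prob_mono) (auto simp: ball_prob_bounds)

lemma Lim_mono_INF:
  fixes F :: "real \<Rightarrow> ereal"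
  assumes mono: "\<And>a b. 0 < a \<Longrightarrow> a \<le> b \<Longrightarrow> F a \<le> F b"
  shows "Lim (at_right 0) F = (INF e\<in>{0<..}. F e)"
proof (rule tendsto_Lim)
  show "\<not> trivial_limit (at_right (0::real))" by simp
  show "(F \<longlongrightarrow> (INF e\<in>{0<..}. F e)) (at_right 0)"
  proof (rule order_tendstoI)
    fix y assume "y < (INF e\<in>{0<..}. F e)"
    then have "\<And>e. e > 0 \<Longrightarrow> y < F e" by (meson INF_lower greaterThan_iff less_le_trans)
    then show "eventually (\<lambda>e. y < F e) (at_right 0)"
      unfolding eventually_at_right_field by (intro exI[of _ 1]) auto
  next
    fix y assume "(INF e\<in>{0<..}. F e) < y"
    then obtain e0 where e0: "e0 > 0" "F e0 < y" by (auto simp: INF_less_iff)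
    then show "eventually (\<lambda>e. F e < y) (at_right 0)"
      unfolding eventually_at_right_field
    proof (intro exI[of _ e0] conjI allI impI)
      fix e :: real assume "0 < e" "e < e0"
      then have "F e \<le> F e0" by (intro mono) auto
      with e0 show "F e < y" by auto
    qed (use e0 in auto)
  qed
qed


theorem lemma2p2:
  fixes p :: "int \<Rightarrow> real" and pm pp :: real
  assumes "\<forall>k. 0 < p k \<and> p k < 1"
    and "(p \<longlongrightarrow> pm) at_bot" and "(p \<longlongrightarrow> pp) at_top"
    and "0 < pm" and "pm < 1" and "0 < pp" and "pp < 1"
    and "\<forall>\<mu>. - rate p pm pp \<mu> \<le> lower_lim p 0 \<mu> \<and> upper_lim p 0 \<mu> \<le> - rate p pm pp \<mu>"
  shows "\<forall>m \<mu>. - rate p pm pp \<mu> \<le> lower_lim p m \<mu> \<and> upper_lim p m \<mu> \<le> - rate p pm pp \<mu>"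
proof (intro allI conjI)
  fix m :: int and \<mu> :: "zbar pmf"
  define L where "L q \<epsilon> = liminf (GG (\<lambda>n. ball_prob p q n \<mu> \<epsilon>))" for q \<epsilon>
  define U where "U q \<epsilon> = limsup (GG (\<lambda>n. ball_prob p q n \<mu> \<epsilon>))" for q \<epsilon>
  have lowdef: "lower_lim p q \<mu> = (INF \<epsilon>\<in>{0<..}. L q \<epsilon>)" for q
  proof -
    have "lower_lim p q \<mu> = Lim (at_right 0) (L q)"
      unfolding lower_lim_def L_def GG_def by simp
    also have "\<dots> = (INF \<epsilon>\<in>{0<..}. L q \<epsilon>)"
      unfolding L_def
      by (rule Lim_mono_INF, rule Liminf_mono) (auto intro!: always_eventually GG_ball_mono)
    finally show ?thesis .
  qed
  have updef: "upper_lim p q \<mu> = (INF \<epsilon>\<in>{0<..}. U q \<epsilon>)" for q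
  proof -
    have "upper_lim p q \<mu> = Lim (at_right 0) (U q)"
      unfolding upper_lim_def U_def GG_def by simp
    also have "\<dots> = (INF \<epsilon>\<in>{0<..}. U q \<epsilon>)"
      unfolding U_def
      by (rule Lim_mono_INF, rule Limsup_mono) (auto intro!: always_eventually GG_ball_mono)
    finally show ?thesis .
  qed
  have cmp: "L b \<epsilon> \<le> L a (\<epsilon> + \<delta>) \<and> U b \<epsilon> \<le> U a (\<epsilon> + \<delta>)" if "\<delta> > 0" for a b \<epsilon> \<delta>
  proof -
    obtain c k where c: "c > 0" and h: "\<forall>n \<epsilon> \<delta>. n \<ge> 1 \<longrightarrow> 2 * real k / real n \<le> \<delta> \<longrightarrow>
     c * ball_prob p b n \<mu> \<epsilon> \<le> ball_prob p a (n + k) \<mu> (\<epsilon> + \<delta>)"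
      using ball_compare[OF assms(1), of b \<mu> a] by blast
    obtain N :: nat where N: "2 * real k / \<delta> \<le> real N" using real_arch_simple by blast
    have hN: "\<forall>n\<ge>max N 1. c * ball_prob p b n \<mu> \<epsilon> \<le> ball_prob p a (n + k) \<mu> (\<epsilon> + \<delta>)"
    proof (intro allI impI)
      fix n assume n: "max N 1 \<le> n"
      have "2 * real k \<le> \<delta> * real N" using N that by (simp add: field_simps)
      also have "\<dots> \<le> \<delta> * real n" using n that by (intro mult_left_mono) auto
      finally have "2 * real k / real n \<le> \<delta>" using n by (simp add: field_simps)
      then show "c * ball_prob p b n \<mu> \<epsilon> \<le> ball_prob p a (n + k) \<mu> (\<epsilon> + \<delta>)"
        using h n by auto
    qed
    show ?thesis unfolding L_def U_def
      using GG_compare[OF _ c hN] ball_prob_bounds by auto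
  qed
  have hyp: "- rate p pm pp \<mu> \<le> lower_lim p 0 \<mu>" "upper_lim p 0 \<mu> \<le> - rate p pm pp \<mu>"
    using assms(8) by auto
  show "- rate p pm pp \<mu> \<le> lower_lim p m \<mu>"
    unfolding lowdef
  proof (rule INF_greatest)
    fix \<epsilon> :: real assume "\<epsilon> \<in> {0<..}"
    then have e: "\<epsilon> > 0" by simp
    have "- rate p pm pp \<mu> \<le> L 0 (\<epsilon> / 2)"
      using hyp(1) e unfolding lowdef by (meson INF_lower greaterThan_iff half_gt_zero order_trans)
    also have "\<dots> \<le> L m (\<epsilon> / 2 + \<epsilon> / 2)" using cmp[where a=m and b=0 and \<epsilon>="\<epsilon>/2" and \<delta>="\<epsilon>/2"] e by auto
    finally show "- rate p pm pp \<mu> \<le> L m \<epsilon>" by simp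
  qed
  have "upper_lim p m \<mu> \<le> upper_lim p 0 \<mu>"
    unfolding updef
  proof (rule INF_greatest)
    fix \<epsilon> :: real assume "\<epsilon> \<in> {0<..}"
    then have e: "\<epsilon> > 0" by simp
    have "(INF \<epsilon>\<in>{0<..}. U m \<epsilon>) \<le> U m (\<epsilon> / 2)" using e by (intro INF_lower) auto
    also have "\<dots> \<le> U 0 (\<epsilon> / 2 + \<epsilon> / 2)" using cmp[where a=0 and b=m and \<epsilon>="\<epsilon>/2" and \<delta>="\<epsilon>/2"] e by auto
    finally show "(INF \<epsilon>\<in>{0<..}. U m \<epsilon>) \<le> U 0 \<epsilon>" by simp
  qed
  then show "upper_lim p m \<mu> \<le> - rate p pm pp \<mu>" using hyp(2) by simp
qed

end
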